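(* Let $h:[0,r_0]\to[0,\infty)$ be a continuous increasing function with $h(0)=0$ such that $\sum_{n=N}^\infty n\,h\!\left(n^{-n^2}\right)<+\infty$ (for some $N$ with $N^{-N^2}\leq r_0$). Then $\mathcal{H}^h(\mathcal{S})=0$. Moreover, $\mathcal{S}$ contains a dense $G_\delta$ subset of $(0,1)$; in particular $\mathcal{S}$ is uncountable.
   Context: For $\alpha\in(0,1)\setminus\mathbb{Q}$ let $p_s/q_s$ be its continued fraction convergents ($\alpha=[0;a_1,a_2,\dots]$, $q_s=a_sq_{s-1}+q_{s-2}$, $q_0=1$, $q_{-1}=0$). Define $\mathcal{S}=\left\{\alpha\in(0,1)\setminus\mathbb{Q}:\ \limsup_{s\to\infty}\frac{\log q_{s+1}}{q_s^2\log q_s}=+\infty\right\}$. For $E\subset\mathbb{C}$ and $\delta>0$, $\mathcal{H}^h_\delta(E)=\inf\sum_n h(\operatorname{diam}A_n/2)$, the infimum over all countable coverings of $E$ by bounded sets $A_n$ of diameter less than $\delta$; the Hausdorff $h$-measure is $\mathcal{H}^h(E)=\lim_{\delta\to0}\mathcal{H}^h_\delta(E)$. *)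

theory Defs
  imports "HOL-Analysis.Analysis"
begin

text \<open>Continued fraction expansion alpha = [0; a_1, a_2, ...] via the Gauss map:
  x_0 = alpha, x_(s+1) = frac (1 / x_s), a_(s+1) = floor (1 / x_s).\<close>
fun cf_rem :: "real \<Rightarrow> nat \<Rightarrow> real" where
  "cf_rem \<alpha> 0 = \<alpha>"
| "cf_rem \<alpha> (Suc n) = frac (1 / cf_rem \<alpha> n)"

definition cf_a :: "real \<Rightarrow> nat \<Rightarrow> nat" where
  "cf_a \<alpha> s = nat \<lfloor>1 / cf_rem \<alpha> (s - 1)\<rfloor>"   \<comment> \<open>a_s, meaningful for s >= 1\<close>

text \<open>cf_qpair alpha s = (q_s, q_(s-1)), with q_0 = 1, q_(-1) = 0,
  q_s = a_s q_(s-1) + q_(s-2).\<close>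
fun cf_qpair :: "real \<Rightarrow> nat \<Rightarrow> nat \<times> nat" where
  "cf_qpair \<alpha> 0 = (1, 0)"
| "cf_qpair \<alpha> (Suc n) = (cf_a \<alpha> (Suc n) * fst (cf_qpair \<alpha> n) + snd (cf_qpair \<alpha> n), fst (cf_qpair \<alpha> n))"

definition cf_q :: "real \<Rightarrow> nat \<Rightarrow> nat" where
  "cf_q \<alpha> s = fst (cf_qpair \<alpha> s)"

definition setS :: "real set" where
  "setS = {\<alpha>. 0 < \<alpha> \<and> \<alpha> < 1 \<and> \<alpha> \<notin> \<rat> \<and>
     limsup (\<lambda>s. ereal (ln (real (cf_q \<alpha> (s + 1))) /
                         ((real (cf_q \<alpha> s))\<^sup>2 * ln (real (cf_q \<alpha> s))))) = \<infinity>}"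

definition hausdorff_delta :: "(real \<Rightarrow> real) \<Rightarrow> real \<Rightarrow> complex set \<Rightarrow> ennreal" where
  "hausdorff_delta h \<delta> E = (INF A \<in> {A :: nat \<Rightarrow> complex set. E \<subseteq> (\<Union>n. A n) \<and>
        (\<forall>n. bounded (A n) \<and> diameter (A n) < \<delta>)}.
        (\<Sum>n. ennreal (h (diameter (A n) / 2))))"

text \<open>H^h(E) = lim_(delta -> 0) H^h_delta(E); since H^h_delta is antitone in delta
  this limit equals the supremum over delta > 0.\<close>
definition hausdorff_h :: "(real \<Rightarrow> real) \<Rightarrow> complex set \<Rightarrow> ennreal" where
  "hausdorff_h h E = (SUP \<delta> \<in> {0<..}. hausdorff_delta h \<delta> E)"

end

theory Submission
  imports Defs
begin

fun cf_ppair :: "real \<Rightarrow> nat \<Rightarrow> nat \<times> nat" where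
  "cf_ppair \<alpha> 0 = (0, 1)"
| "cf_ppair \<alpha> (Suc n) = (cf_a \<alpha> (Suc n) * fst (cf_ppair \<alpha> n) + snd (cf_ppair \<alpha> n), fst (cf_ppair \<alpha> n))"

lemma frac_aux: "(c::real) > 0 \<Longrightarrow> (b1 + (1/c)*b2)/(b3 + (1/c)*b4) = (b1*c+b2)/(b3*c+b4)"
proof -
  assume c: "c > 0"
  have "b1 + (1/c)*b2 = (b1*c+b2)/c" "b3 + (1/c)*b4 = (b3*c+b4)/c" using c by (simp_all add: field_simps)
  then show ?thesis using c by simp
qed

lemma diff_aux: "(D::real) \<noteq> 0 \<Longrightarrow> Q \<noteq> 0 \<Longrightarrow> a = N/D \<Longrightarrow> a - P/Q = (N*Q - P*D)/(D*Q)"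
  by (simp add: field_simps)

lemma sub_aux: "(a::real) > 0 \<Longrightarrow> b > 0 \<Longrightarrow> 1/(a*b) - 1/(b*(a+1)) = 1/(a*b*(a+1))"
  by (simp add: divide_simps)

lemma inv_less_aux: "(x::real) > 0 \<Longrightarrow> y > 0 \<Longrightarrow> 1/x < 1/y \<Longrightarrow> y < x"
  by (simp add: divide_simps)

locale irr =
  fixes \<alpha> :: real
  assumes pos: "0 < \<alpha>" and lt1: "\<alpha> < 1" and nrat: "\<alpha> \<notin> \<rat>"
begin

lemma rem_props: "0 < cf_rem \<alpha> n \<and> cf_rem \<alpha> n < 1 \<and> cf_rem \<alpha> n \<notin> \<rat>"
proof (induction n)
  case 0 then show ?case using pos lt1 nrat by simp
next
  case (Suc n)
  define x where "x = cf_rem \<alpha> n"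
  have x: "0 < x" "x < 1" "x \<notin> \<rat>" using Suc x_def by auto
  have y: "1/x \<notin> \<rat>"
  proof
    assume "1/x \<in> \<rat>" then have "1/(1/x) \<in> \<rat>" by (rule Rats_divide[OF Rats_1])
    with x show False by simp
  qed
  have f: "frac (1/x) \<notin> \<rat>"
  proof
    assume "frac (1/x) \<in> \<rat>"
    then have "frac (1/x) + of_int \<lfloor>1/x\<rfloor> \<in> \<rat>" by (intro Rats_add) auto
    moreover have "frac (1/x) + of_int \<lfloor>1/x\<rfloor> = 1/x" by (simp add: frac_def)
    ultimately show False using y by metis
  qed
  have "frac (1/x) \<noteq> 0" using f by (metis Rats_0)
  then have "0 < frac (1/x)" using frac_ge_0[of "1/x"] by linarith
  then show ?case using f frac_lt_1[of "1/x"] by (simp add: x_def)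
qed

lemma a_props: "cf_a \<alpha> (Suc n) \<ge> 1 \<and> 1 / cf_rem \<alpha> n = real (cf_a \<alpha> (Suc n)) + cf_rem \<alpha> (Suc n)"
proof -
  define x where "x = cf_rem \<alpha> n"
  have x: "0 < x" "x < 1" using rem_props x_def by auto
  have "1 < 1/x" using x by simp
  then have fl: "\<lfloor>1/x\<rfloor> \<ge> 1" by (simp add: one_le_floor)
  have n1: "nat \<lfloor>1/x\<rfloor> \<ge> 1" using fl by linarith
  have fl0: "0 \<le> \<lfloor>1/x\<rfloor>" using fl by linarith
  have r: "real (nat \<lfloor>1/x\<rfloor>) = of_int \<lfloor>1/x\<rfloor>" using of_nat_nat[OF fl0] by simp
  have "cf_rem \<alpha> (Suc n) = 1/x - of_int \<lfloor>1/x\<rfloor>" by (simp add: x_def frac_def)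
  then show ?thesis using n1 r unfolding cf_a_def by (simp add: x_def)
qed

declare cf_rem.simps(2)[simp del]

lemma q_step: "fst (cf_qpair \<alpha> (Suc n)) \<ge> fst (cf_qpair \<alpha> n) + snd (cf_qpair \<alpha> n)"
proof -
  have "cf_a \<alpha> (Suc n) * fst (cf_qpair \<alpha> n) \<ge> 1 * fst (cf_qpair \<alpha> n)"
    using a_props[of n] by (intro mult_le_mono1) simp
  then show ?thesis by simp
qed

lemma q_ge1: "fst (cf_qpair \<alpha> n) \<ge> 1"
proof (induction n)
  case 0 then show ?case by simp
next
  case (Suc n) then show ?case using q_step[of n] by linarith
qed

lemma qm_ge1: "n \<ge> 1 \<Longrightarrow> snd (cf_qpair \<alpha> n) \<ge> 1"
  using q_ge1 by (cases n) auto


lemma q_mono_Suc: "fst (cf_qpair \<alpha> n) \<le> fst (cf_qpair \<alpha> (Suc n))"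
  using le_trans[OF le_add1 q_step[of n]] .

lemma q_ge_n: "fst (cf_qpair \<alpha> n) \<ge> n"
proof (induction n)
  case 0 then show ?case by simp
next
  case (Suc n)
  show ?case
  proof (cases "n = 0")
    case True then show ?thesis using q_ge1[of 1] by simp
  next
    case False
    then show ?thesis using q_step[of n] qm_ge1[of n] Suc by linarith
  qed
qed

lemma q_mono: "m \<le> n \<Longrightarrow> fst (cf_qpair \<alpha> m) \<le> fst (cf_qpair \<alpha> n)"
  using q_mono_Suc by (rule lift_Suc_mono_le)

abbreviation "Pn n \<equiv> real (fst (cf_ppair \<alpha> n))"
abbreviation "Pm n \<equiv> real (snd (cf_ppair \<alpha> n))"
abbreviation "Qn n \<equiv> real (fst (cf_qpair \<alpha> n))"
abbreviation "Qm n \<equiv> real (snd (cf_qpair \<alpha> n))"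
abbreviation "X n \<equiv> cf_rem \<alpha> n"

lemma det: "Pn n * Qm n - Pm n * Qn n = (-1) ^ (n+1)"
  by (induction n) (simp_all add: algebra_simps)

lemma identity: "\<alpha> = (Pn n + X n * Pm n) / (Qn n + X n * Qm n)"
proof (induction n)
  case 0 then show ?case by simp
next
  case (Suc n)
  define a where "a = real (cf_a \<alpha> (Suc n))"
  define x' where "x' = X (Suc n)"
  have ax: "1 / X n = a + x'" using a_props[of n] by (simp add: a_def x'_def)
  have x'pos: "0 < x'" using rem_props x'_def by auto
  have apos: "a \<ge> 1" using a_props[of n] by (simp add: a_def)
  have xn: "X n = 1 / (a + x')" using ax rem_props[of n]
    by (metis div_by_1 divide_divide_eq_right mult.commute nonzero_mult_div_cancel_left
        one_divide_eq_0_iff zero_neq_one)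
  have Qpos: "Qn n \<ge> 1" using q_ge1[of n] by simp
  have ne: "a + x' \<noteq> 0" using x'pos apos by simp
  have Pred: "Pn (Suc n) = a * Pn n + Pm n" "Pm (Suc n) = Pn n"
    "Qn (Suc n) = a * Qn n + Qm n" "Qm (Suc n) = Qn n" by (simp_all add: a_def)
  have "\<alpha> = (Pn n + X n * Pm n) / (Qn n + X n * Qm n)" by (rule Suc)
  also have "\<dots> = (Pn n * (a + x') + Pm n) / (Qn n * (a + x') + Qm n)"
    unfolding xn using x'pos apos by (intro frac_aux) simp
  also have "\<dots> = (Pn (Suc n) + X (Suc n) * Pm (Suc n)) / (Qn (Suc n) + X (Suc n) * Qm (Suc n))"
    unfolding Pred x'_def[symmetric] by (simp add: algebra_simps)
  finally show ?case .
qed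

lemma key: "\<bar>\<alpha> - Pn n / Qn n\<bar> = 1 / (Qn n * (Qn (Suc n) + X (Suc n) * Qn n))"
proof -
  define a where "a = real (cf_a \<alpha> (Suc n))"
  define x' where "x' = X (Suc n)"
  define x where "x = X n"
  have ax: "1 / x = a + x'" using a_props[of n] by (simp add: a_def x'_def x_def)
  have xpos: "0 < x" using rem_props x_def by auto
  have x'pos: "0 < x'" using rem_props x'_def by auto
  have Qpos: "Qn n \<ge> 1" using q_ge1[of n] by simp
  have Qm0: "Qm n \<ge> 0" by simp
  have D: "Qn n + x * Qm n > 0" using Qpos Qm0 xpos by (smt (verit) mult_nonneg_nonneg)
  have Q1: "Qn (Suc n) = a * Qn n + Qm n" by (simp add: a_def)
  have "\<alpha> - Pn n / Qn n = ((Pn n + x * Pm n) * Qn n - Pn n * (Qn n + x * Qm n)) / ((Qn n + x * Qm n) * Qn n)"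
    using identity[of n] D Qpos unfolding x_def[symmetric] by (intro diff_aux) auto
  also have "\<dots> = x * (Pm n * Qn n - Pn n * Qm n) / (Qn n * (Qn n + x * Qm n))"
    by (simp add: algebra_simps)
  finally have "\<alpha> - Pn n / Qn n = x * (Pm n * Qn n - Pn n * Qm n) / (Qn n * (Qn n + x * Qm n))" .
  moreover have "\<bar>Pm n * Qn n - Pn n * Qm n\<bar> = 1" using det[of n]
    by (simp add: abs_minus_commute)
  ultimately have "\<bar>\<alpha> - Pn n / Qn n\<bar> = x / (Qn n * (Qn n + x * Qm n))"
    using xpos D Qpos by (simp add: abs_mult abs_divide)
  also have "\<dots> = 1 / (Qn n * (Qn n / x + Qm n))"
    using xpos D Qpos by (simp add: field_simps)
  also have "Qn n / x = Qn n * (a + x')" using ax by (metis divide_inverse inverse_eq_divide)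
  finally show ?thesis unfolding Q1 x'_def by (simp add: algebra_simps)
qed

lemma approx_upper: "\<bar>\<alpha> - Pn n / Qn n\<bar> < 1 / (Qn n * Qn (Suc n))"
proof -
  have Qpos: "Qn n \<ge> 1" "Qn (Suc n) \<ge> 1" using q_ge1 by (auto simp del: cf_qpair.simps)
  have "X (Suc n) > 0" using rem_props by auto
  then have "Qn (Suc n) < Qn (Suc n) + X (Suc n) * Qn n" using Qpos by simp
  then show ?thesis unfolding key using Qpos
    by (intro divide_strict_left_mono mult_strict_left_mono) auto
qed

lemma approx_lower: "1 / (Qn n * (Qn (Suc n) + Qn n)) < \<bar>\<alpha> - Pn n / Qn n\<bar>"
proof -
  have Qpos: "Qn n \<ge> 1" "Qn (Suc n) \<ge> 1" using q_ge1 by (auto simp del: cf_qpair.simps)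
  have "X (Suc n) < 1" using rem_props by auto
  then have "X (Suc n) * Qn n < Qn n" using Qpos by simp
  then have "Qn (Suc n) + X (Suc n) * Qn n < Qn (Suc n) + Qn n" by simp
  moreover have "0 \<le> X (Suc n) * Qn n" using rem_props[of "Suc n"] by simp
  then have "0 < Qn (Suc n) + X (Suc n) * Qn n" using Qpos by linarith
  ultimately show ?thesis unfolding key using Qpos
    by (intro divide_strict_left_mono mult_strict_left_mono) auto
qed


lemma bracket:
  assumes "q \<ge> 1"
  shows "\<exists>s. fst (cf_qpair \<alpha> s) \<le> q \<and> q < fst (cf_qpair \<alpha> (Suc s))"
proof -
  define S where "S = {s. fst (cf_qpair \<alpha> s) \<le> q}"
  have fin: "finite S"
    by (rule finite_subset[of _ "{..q}"]) (use q_ge_n in \<open>auto simp: S_def intro: le_trans\<close>)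
  have "0 \<in> S" using assms by (simp add: S_def)
  define s where "s = Max S"
  have "s \<in> S" using fin \<open>0 \<in> S\<close> s_def by (metis Max_in empty_iff)
  moreover have "Suc s \<notin> S" using fin s_def
    by (metis Max_ge Suc_n_not_le_n)
  ultimately show ?thesis unfolding S_def by auto
qed

lemma H_core:
  assumes "Qn s \<ge> 2" "ln (Qn (Suc s)) > (Qn s)^2 * ln (Qn s)"
  shows "\<bar>\<alpha> - Pn s / Qn s\<bar> < 1 / Qn s ^ ((fst (cf_qpair \<alpha> s))^2)"
    and "fst (cf_ppair \<alpha> s) \<le> fst (cf_qpair \<alpha> s)"
proof -
  define m where "m = (fst (cf_qpair \<alpha> s))^2"
  have Qs: "Qn s \<ge> 2" using assms by simp
  have Q1: "Qn (Suc s) \<ge> 1" using q_ge1[of "Suc s"] by (simp del: cf_qpair.simps)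
  have "ln (Qn s ^ m) = real m * ln (Qn s)" using Qs by (simp add: ln_realpow)
  also have "real m = (Qn s)^2" by (simp add: m_def)
  finally have "ln (Qn s ^ m) < ln (Qn (Suc s))" using assms(2) by simp
  then have lt: "Qn s ^ m < Qn (Suc s)" using Qs Q1 by (subst (asm) ln_less_cancel_iff) auto
  have pp: "Qn s ^ m > 0" using Qs by simp
  have "1 / (Qn s * Qn (Suc s)) \<le> 1 / Qn (Suc s)" using Qs Q1
    by (intro divide_left_mono) (auto simp del: cf_qpair.simps)
  also have "\<dots> < 1 / Qn s ^ m"
  proof (rule divide_strict_left_mono)
    show "0 < Qn (Suc s) * Qn s ^ m" using Q1 pp by (intro mult_pos_pos) linarith+
  qed (use lt in auto)
  finally show "\<bar>\<alpha> - Pn s / Qn s\<bar> < 1 / Qn s ^ ((fst (cf_qpair \<alpha> s))^2)"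
    using approx_upper[of s] unfolding m_def by linarith
  have "1 / (Qn s * Qn (Suc s)) \<le> 1 / Qn s" using Qs Q1
    by (intro divide_left_mono) (auto simp del: cf_qpair.simps)
  then have "Pn s / Qn s < 1 + 1 / Qn s" using approx_upper[of s] lt1 by linarith
  then have "Pn s < Qn s + 1" using Qs by (simp add: field_simps)
  then show "fst (cf_ppair \<alpha> s) \<le> fst (cf_qpair \<alpha> s)" by linarith
qed


lemma G_core:
  assumes q2: "q \<ge> 2" and p: "0 < p" "p < q"
    and close: "\<bar>\<alpha> - real p / real q\<bar> < 1 / ((real q + 1)^3 * real q ^ (k * q^2))"
  shows "\<exists>s. 2 \<le> Qn s \<and> Qn s \<le> real q \<and> real k < ln (Qn (Suc s)) / ((Qn s)^2 * ln (Qn s))"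
proof -
  define qr where "qr = real q"
  define qp where "qp = real q ^ (k * q^2)"
  define \<epsilon> where "\<epsilon> = 1 / ((qr + 1)^3 * qp)"
  obtain s where s: "fst (cf_qpair \<alpha> s) \<le> q" "q < fst (cf_qpair \<alpha> (Suc s))"
    using bracket[of q] q2 by auto
  define Qs where "Qs = Qn s"
  define Q1 where "Q1 = Qn (Suc s)"
  define Ps where "Ps = Pn s"
  have qr2: "qr \<ge> 2" using q2 qr_def by simp
  have Qs1: "Qs \<ge> 1" using q_ge1[of s] Qs_def by simp
  have Qsq: "Qs \<le> qr" using s(1) Qs_def qr_def by simp
  have Q1q: "Q1 \<ge> qr + 1" using s(2) Q1_def qr_def
    by (metis Suc_leI of_nat_Suc of_nat_le_iff add.commute)
  have qp1: "qp \<ge> 1" using qr2 unfolding qp_def qr_def[symmetric] by (intro one_le_power) simp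
  have epos: "\<epsilon> > 0" using qp1 qr2 by (simp add: \<epsilon>_def)
  have cl: "\<bar>\<alpha> - real p / qr\<bar> < \<epsilon>" using close by (simp add: \<epsilon>_def qr_def qp_def)
  have up: "\<bar>\<alpha> - Ps / Qs\<bar> < 1 / (Qs * Q1)" using approx_upper[of s] by (simp add: Ps_def Qs_def Q1_def)
  have lo: "1 / (Qs * (Q1 + Qs)) < \<bar>\<alpha> - Ps / Qs\<bar>" using approx_lower[of s] by (simp add: Ps_def Qs_def Q1_def)
  have eq: "real p * Qs = Ps * qr"
  proof (rule ccontr)
    assume ne: "real p * Qs \<noteq> Ps * qr"
    define d where "d = int p * int (fst (cf_qpair \<alpha> s)) - int (fst (cf_ppair \<alpha> s)) * int q"
    have dr: "real_of_int d = real p * Qs - Ps * qr" by (simp add: d_def Qs_def Ps_def qr_def)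
    have "d \<noteq> 0" using ne dr by auto
    then have "\<bar>real_of_int d\<bar> \<ge> 1" by linarith
    then have n1: "\<bar>real p * Qs - Ps * qr\<bar> \<ge> 1" using dr by simp
    have "real p / qr - Ps / Qs = (real p * Qs - Ps * qr) / (qr * Qs)" using qr2 Qs1 by (simp add: field_simps)
    then have "\<bar>real p / qr - Ps / Qs\<bar> = \<bar>real p * Qs - Ps * qr\<bar> / (qr * Qs)" using qr2 Qs1 by (simp add: abs_divide)
    also have "\<dots> \<ge> 1 / (qr * Qs)" using n1 qr2 Qs1 by (intro divide_right_mono) auto
    finally have A: "1 / (qr * Qs) \<le> \<bar>real p / qr - Ps / Qs\<bar>" .
    have B: "\<bar>real p / qr - Ps / Qs\<bar> \<le> \<bar>\<alpha> - real p / qr\<bar> + \<bar>\<alpha> - Ps / Qs\<bar>" by linarith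
    have C: "1 / (Qs * Q1) \<le> 1 / (Qs * (qr + 1))" using Q1q Qs1 qr2
      by (intro divide_left_mono mult_left_mono) auto
    have "1 / (qr * Qs) < \<epsilon> + 1 / (Qs * (qr + 1))" using A B C cl up by linarith
    moreover have "1 / (qr * Qs) - 1 / (Qs * (qr + 1)) = 1 / (qr * Qs * (qr + 1))"
      using qr2 Qs1 by (intro sub_aux) auto
    ultimately have D: "1 / (qr * Qs * (qr + 1)) < \<epsilon>" by linarith
    have "\<epsilon> \<le> 1 / ((qr + 1)^3)" unfolding \<epsilon>_def using qp1 qr2
      by (intro divide_left_mono) (auto simp: mult_le_cancel_left1)
    also have "\<dots> \<le> 1 / (qr * Qs * (qr + 1))"
    proof (intro divide_left_mono)
      have "qr * Qs \<le> (qr + 1) * (qr + 1)" using Qsq qr2 Qs1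
        by (intro mult_mono) auto
      then have "qr * Qs * (qr + 1) \<le> (qr + 1) * (qr + 1) * (qr + 1)" using qr2
        by (intro mult_right_mono) auto
      then show "qr * Qs * (qr + 1) \<le> (qr + 1)^3" by (simp add: power3_eq_cube)
    qed (use qr2 Qs1 in auto)
    finally show False using D by linarith
  qed
  have Qs2: "Qs \<ge> 2"
  proof (rule ccontr)
    assume "\<not> Qs \<ge> 2"
    then have "fst (cf_qpair \<alpha> s) = 1" using q_ge1[of s] Qs_def by simp
    then have "p = fst (cf_ppair \<alpha> s) * q" using eq by (simp add: Qs_def Ps_def qr_def flip: of_nat_mult)
    then show False using p by (cases "fst (cf_ppair \<alpha> s)") auto
  qed
  have "Ps / Qs = real p / qr" using eq qr2 Qs1 by (simp add: field_simps)
  then have "1 / (Qs * (Q1 + Qs)) < \<epsilon>" using lo cl by simp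
  moreover have "1 / (Qs * (2 * Q1)) \<le> 1 / (Qs * (Q1 + Qs))" using Qs1 Q1q Qsq
    by (intro divide_left_mono mult_left_mono) auto
  ultimately have F: "1 / (Qs * (2 * Q1)) < 1 / ((qr + 1)^3 * qp)" unfolding \<epsilon>_def by linarith
  have E: "(qr + 1)^3 * qp < Qs * (2 * Q1)"
  proof (rule inv_less_aux[OF _ _ F])
    show "0 < (qr + 1)^3 * qp" using qr2 qp1 by simp
    show "0 < Qs * (2 * Q1)" using Qs1 Q1q qr2 by simp
  qed
  have qpQ1: "qp < Q1"
  proof (rule ccontr)
    assume "\<not> qp < Q1"
    then have "Qs * (2 * Q1) \<le> qr * (2 * qp)" using Qsq Qs1 Q1q qr2 by (intro mult_mono) auto
    also have "\<dots> = (2 * qr) * qp" by simp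
    also have "\<dots> \<le> (qr + 1)^3 * qp"
    proof (intro mult_right_mono)
      have sq: "(qr + 1) * (qr + 1) = qr * qr + 2 * qr + 1" by (simp add: algebra_simps)
      have "0 \<le> qr * qr" by simp
      then have h1: "2 * qr \<le> (qr + 1) * (qr + 1)" using sq by linarith
      have "(qr + 1) * (qr + 1) * 1 \<le> (qr + 1) * (qr + 1) * (qr + 1)" using qr2
        by (intro mult_left_mono) auto
      then have "2 * qr \<le> (qr + 1) * (qr + 1) * (qr + 1)" using h1 by linarith
      then show "2 * qr \<le> (qr + 1)^3" by (simp add: power3_eq_cube)
    qed (use qp1 in auto)
    finally show False using E by linarith
  qed
  have lnQ1: "ln Q1 > real k * qr^2 * ln qr"
  proof -
    have "ln qp = real (k * q^2) * ln qr" unfolding qp_def qr_def using qr2 qr_def by (simp add: ln_realpow)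
    then have "ln qp = real k * qr^2 * ln qr" by (simp add: qr_def)
    moreover have "ln qp < ln Q1" using qpQ1 qp1 by simp
    ultimately show ?thesis by simp
  qed
  have "real k * (Qs^2 * ln Qs) \<le> real k * (qr^2 * ln qr)"
    using Qsq Qs2 by (intro mult_left_mono mult_mono power_mono) auto
  then have "real k * (Qs^2 * ln Qs) < ln Q1" using lnQ1 by (simp add: mult.assoc)
  moreover have "Qs^2 * ln Qs > 0" using Qs2 by simp
  ultimately have "real k < ln Q1 / (Qs^2 * ln Qs)" by (simp add: pos_less_divide_eq)
  then show ?thesis using Qs2 Qsq by (auto simp: Qs_def Q1_def qr_def)
qed

end

definition ratio :: "real \<Rightarrow> nat \<Rightarrow> real" where
  "ratio \<alpha> s = ln (real (cf_q \<alpha> (s + 1))) / ((real (cf_q \<alpha> s))\<^sup>2 * ln (real (cf_q \<alpha> s)))"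

definition epsk :: "nat \<Rightarrow> nat \<Rightarrow> real" where
  "epsk k q = 1 / ((real q + 1)^3 * real q ^ (k * q^2))"

definition U :: "nat \<Rightarrow> real set" where
  "U k = (\<Union>q\<in>{q. q \<ge> k + 2}. \<Union>p\<in>{p. 0 < p \<and> p < q}. ball (real p / real q) (epsk k q))"

definition Gs :: "real set \<Rightarrow> real set set" where
  "Gs C = range (\<lambda>k. U k \<inter> {0<..<1}) \<union> (\<lambda>r. - {r}) ` C"

lemma lin_aux: "(a::real) \<le> b \<Longrightarrow> a = x - c \<Longrightarrow> c \<le> d \<Longrightarrow> x - b \<le> d"
  by linarith

lemma epsk_pos: "q \<ge> 1 \<Longrightarrow> epsk k q > 0"
  by (simp add: epsk_def)

lemma inS:
  assumes a: "0 < \<alpha>" "\<alpha> < 1" "\<alpha> \<notin> \<rat>" and U: "\<And>k. \<alpha> \<in> U k"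
  shows "\<alpha> \<in> setS"
proof -
  interpret irr \<alpha> using a by unfold_locales
  have key: "\<exists>s. real k < ratio \<alpha> s" for k
  proof -
    from U[of k] obtain q p where qp: "q \<ge> k + 2" "0 < p" "p < q"
      "dist \<alpha> (real p / real q) < epsk k q"
      unfolding U_def by (auto simp: dist_commute)
    then have "\<bar>\<alpha> - real p / real q\<bar> < 1 / ((real q + 1)^3 * real q ^ (k * q^2))"
      by (simp add: epsk_def dist_real_def)
    from G_core[OF _ qp(2,3) this] qp(1) obtain s where
      "real k < ln (Qn (Suc s)) / ((Qn s)^2 * ln (Qn s))" by auto
    then show ?thesis by (auto simp: ratio_def cf_q_def)
  qed
  have "limsup (\<lambda>s. ereal (ratio \<alpha> s)) = \<infinity>"
  proof (rule ccontr)
    assume "limsup (\<lambda>s. ereal (ratio \<alpha> s)) \<noteq> \<infinity>"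
    then obtain n :: nat where "limsup (\<lambda>s. ereal (ratio \<alpha> s)) < ereal (real n)"
      using less_PInf_Ex_of_nat by blast
    then have "eventually (\<lambda>s. ereal (ratio \<alpha> s) < ereal (real n)) sequentially"
      by (rule Limsup_lessD)
    then obtain S0 where S0: "\<And>s. s \<ge> S0 \<Longrightarrow> ratio \<alpha> s < real n"
      unfolding eventually_sequentially by auto
    define B where "B = Max (insert (real n) (ratio \<alpha> ` {..S0}))"
    have B1: "real n \<le> B" unfolding B_def by simp
    have B2: "s \<le> S0 \<Longrightarrow> ratio \<alpha> s \<le> B" for s unfolding B_def by (intro Max_ge) auto
    define k where "k = nat \<lceil>B\<rceil>"
    have kB: "B \<le> real k" unfolding k_def by linarith
    obtain s where s: "real k < ratio \<alpha> s" using key by blast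
    show False
    proof (cases "s \<le> S0")
      case True then show False using B2[of s] kB s by linarith
    next
      case False then show False using S0[of s] B1 kB s by linarith
    qed
  qed
  then show ?thesis using a unfolding setS_def ratio_def by simp
qed

lemma dense_U:
  assumes x: "x \<in> {0..1}"
  shows "x \<in> closure (U k \<inter> {0<..<1})"
  unfolding closure_approachable
proof (intro allI impI)
  fix e :: real assume e: "e > 0"
  define q where "q = max (k + 3) (nat \<lceil>2 / e\<rceil> + 1)"
  have q3: "q \<ge> k + 3" "q \<ge> 3" unfolding q_def by auto
  have qe: "real q > 2 / e" unfolding q_def by linarith
  define m where "m = nat \<lfloor>x * (real q - 2)\<rfloor>"
  define p where "p = m + 1"
  have xq0: "0 \<le> x * (real q - 2)" using x q3 by simp
  have xq1: "x * (real q - 2) \<le> real q - 2" using x q3 by (simp add: mult_left_le_one_le)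
  have m1: "real m \<le> x * (real q - 2)" "x * (real q - 2) < real m + 1"
    unfolding m_def using xq0 by linarith+
  have "real m \<le> real q - 2" using m1 xq1 by linarith
  then have pq: "0 < p" "p < q" unfolding p_def using q3 by linarith+
  have qpos: "real q > 0" using q3 by simp
  have d1: "real p / real q - x \<le> 1 / real q"
  proof -
    have "real p \<le> x * (real q - 2) + 1" using m1 p_def by simp
    then have "real p / real q \<le> (x * (real q - 2) + 1) / real q" using qpos by (simp add: divide_right_mono)
    also have "\<dots> = x + (1 - 2 * x) / real q" using qpos by (simp add: field_simps)
    also have "\<dots> \<le> x + 1 / real q" using x qpos by (intro add_left_mono divide_right_mono) auto
    finally show ?thesis by simp
  qed
  have d2: "x - real p / real q \<le> 2 / real q"
  proof -
    have "x * (real q - 2) \<le> real p" using m1 p_def by simp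
    then have "x * (real q - 2) / real q \<le> real p / real q" using qpos by (simp add: divide_right_mono)
    moreover have "x * (real q - 2) / real q = x - 2 * x / real q" using qpos by (simp add: field_simps)
    moreover have "2 * x / real q \<le> 2 / real q" using x qpos by (intro divide_right_mono) auto
    ultimately show ?thesis by (rule lin_aux)
  qed
  have "2 / real q < e" using qe e qpos by (simp add: field_simps)
  then have dist: "dist (real p / real q) x < e" using d1 d2 qpos
    unfolding dist_real_def by (smt (verit) divide_right_mono)
  have inU: "real p / real q \<in> U k"
  proof -
    have "q \<in> {q. q \<ge> k+2}" using q3 by simp
    moreover have "p \<in> {p. 0 < p \<and> p < q}" using pq by simp
    moreover have "real p / real q \<in> ball (real p / real q) (epsk k q)" using q3 epsk_pos[of q k] by simp
    ultimately show ?thesis unfolding U_def by blast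
  qed
  have "real p / real q \<in> {0<..<1}" using pq qpos by (simp add: field_simps)
  then show "\<exists>y\<in>U k \<inter> {0<..<1}. dist y x < e" using inU dist by blast
qed

lemma dense_pt:
  assumes x: "x \<in> {0..1::real}"
  shows "x \<in> closure ({0..1} \<inter> - {r})"
  unfolding closure_approachable
proof (intro allI impI)
  fix e :: real assume e: "e > 0"
  define d where "d = min (e / 2) (1 / 4)"
  have d: "0 < d" "d < e" "d \<le> 1/4" using e by (auto simp: d_def)
  show "\<exists>y\<in>{0..1} \<inter> - {r}. dist y x < e"
  proof (cases "x = r")
    case False then show ?thesis using x e by (intro bexI[of _ x]) auto
  next
    case True
    show ?thesis
    proof (cases "x \<le> 1/2")
      case True then show ?thesis using x d \<open>x = r\<close>
        by (intro bexI[of _ "x + d"]) (auto simp: dist_real_def)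
    next
      case False then show ?thesis using x d \<open>x = r\<close>
        by (intro bexI[of _ "x - d"]) (auto simp: dist_real_def)
    qed
  qed
qed

lemma open_U: "open (U k)"
  unfolding U_def by (intro open_UN ballI open_ball)

lemma Gs_open: "T \<in> Gs C \<Longrightarrow> open T"
  unfolding Gs_def using open_U by (auto intro: open_Int)

lemma baire_app:
  assumes "countable C"
  shows "{0..1} \<subseteq> closure ({0..1} \<inter> \<Inter> (Gs C))"
proof -
  define G' where "G' = (\<lambda>T. {0..1} \<inter> T) ` Gs C"
  have cG: "countable (Gs C)" unfolding Gs_def using assms by (intro countable_Un countable_image) auto
  have "{0..1::real} \<subseteq> closure (\<Inter> G')"
  proof (rule Baire)
    show "closed {0..1::real}" by simp
    show "countable G'" using cG unfolding G'_def by simp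
    fix T assume "T \<in> G'"
    then obtain T0 where T0: "T0 \<in> Gs C" "T = {0..1} \<inter> T0" unfolding G'_def by auto
    show "openin (top_of_set {0..1}) T \<and> {0..1} \<subseteq> closure T"
    proof
      show "openin (top_of_set {0..1}) T" using Gs_open[OF T0(1)] T0(2) openin_open by blast
      show "{0..1} \<subseteq> closure T"
      proof
        fix x :: real assume x: "x \<in> {0..1}"
        from T0(1) show "x \<in> closure T" unfolding Gs_def
        proof
          assume "T0 \<in> range (\<lambda>k. U k \<inter> {0<..<1})"
          then obtain k where "T0 = U k \<inter> {0<..<1}" by auto
          then have "T = U k \<inter> {0<..<1}" using T0(2) by auto
          then show ?thesis using dense_U[OF x] by simp
        next
          assume "T0 \<in> (\<lambda>r. - {r}) ` C"
          then obtain r where "T0 = - {r}" by auto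
          then show ?thesis using dense_pt[OF x] T0(2) by simp
        qed
      qed
    qed
  qed
  moreover have "\<Inter> G' = {0..1} \<inter> \<Inter> (Gs C)"
    unfolding G'_def Gs_def by auto
  ultimately show ?thesis by simp
qed

lemma Gs_sub:
  assumes "\<rat> \<subseteq> C"
  shows "\<Inter> (Gs C) \<subseteq> setS"
proof
  fix \<alpha> assume a: "\<alpha> \<in> \<Inter> (Gs C)"
  have "U k \<inter> {0<..<1} \<in> Gs C" for k unfolding Gs_def by auto
  then have "\<alpha> \<in> U k \<inter> {0<..<1}" for k using a by blast
  moreover have "\<alpha> \<notin> \<rat>"
  proof
    assume "\<alpha> \<in> \<rat>"
    then have "- {\<alpha>} \<in> Gs C" using assms unfolding Gs_def by auto
    then show False using a by auto
  qed
  ultimately show "\<alpha> \<in> setS" by (intro inS) auto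
qed

theorem part2:
  "(\<exists>G. G \<subseteq> setS \<and> gdelta_in euclideanreal G \<and> {0<..<1} \<subseteq> closure G) \<and> uncountable setS"
proof
  define G where "G = \<Inter> (Gs \<rat>)"
  have "G \<subseteq> setS" using Gs_sub[of \<rat>] G_def by simp
  moreover have "gdelta_in euclideanreal G"
    unfolding G_def
  proof (rule gdelta_in_Inter)
    show "countable (Gs \<rat>)" unfolding Gs_def using countable_rat by (intro countable_Un countable_image) auto
    show "Gs \<rat> \<noteq> {}" unfolding Gs_def by auto
    fix S assume "S \<in> Gs \<rat>"
    then show "gdelta_in euclideanreal S" using Gs_open by (intro open_imp_gdelta_in) (simp add: open_openin[symmetric])
  qed
  moreover have "{0<..<1} \<subseteq> closure G"
    using baire_app[OF countable_rat] closure_mono[of "{0..1} \<inter> G" G] G_def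
    by fastforce
  ultimately show "\<exists>G. G \<subseteq> setS \<and> gdelta_in euclideanreal G \<and> {0<..<1} \<subseteq> closure G" by blast
  show "uncountable setS"
  proof
    assume c: "countable setS"
    define C where "C = \<rat> \<union> setS"
    have cC: "countable C" using c countable_rat unfolding C_def by simp
    have "\<Inter> (Gs C) \<subseteq> setS" using Gs_sub[of C] C_def by auto
    moreover have "\<Inter> (Gs C) \<inter> setS = {}"
    proof -
      have "\<alpha> \<in> setS \<Longrightarrow> \<alpha> \<notin> \<Inter> (Gs C)" for \<alpha>
      proof -
        assume "\<alpha> \<in> setS"
        then have "- {\<alpha>} \<in> Gs C" unfolding Gs_def C_def by auto
        then show ?thesis by auto
      qed
      then show ?thesis by auto
    qed
    ultimately have "\<Inter> (Gs C) = {}" by auto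
    then show False using baire_app[OF cC] by auto
  qed
qed


definition rho :: "nat \<Rightarrow> real" where "rho q = 1 / real q ^ (q^2)"

lemma rho_pos: "q \<ge> 1 \<Longrightarrow> rho q > 0"
  by (simp add: rho_def)

lemma rho_mono:
  assumes "1 \<le> m" "m \<le> n" shows "rho n \<le> rho m"
proof -
  have "real m ^ (m^2) \<le> real n ^ (m^2)" using assms by (intro power_mono) auto
  also have "\<dots> \<le> real n ^ (n^2)" using assms by (intro power_increasing power_mono) auto
  finally show ?thesis unfolding rho_def using assms by (intro divide_left_mono) auto
qed

lemma rho_le: assumes "q \<ge> 1" shows "rho q \<le> 1 / real q"
proof -
  have "real q ^ 1 \<le> real q ^ (q^2)" using assms by (intro power_increasing) (auto simp: power2_eq_square)
  then show ?thesis unfolding rho_def using assms by (intro divide_left_mono) auto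
qed

lemma freq_ratio:
  assumes "\<alpha> \<in> setS"
  shows "\<exists>s\<ge>Q. ratio \<alpha> s > 1"
proof (rule ccontr)
  assume "\<not> ?thesis"
  then have ev: "eventually (\<lambda>s. ereal (ratio \<alpha> s) \<le> 1) sequentially"
    unfolding eventually_sequentially by (auto simp: not_less)
  have "limsup (\<lambda>s. ereal (ratio \<alpha> s)) \<le> 1"
    unfolding Limsup_le_iff
  proof (intro allI impI)
    fix y :: ereal assume "y > 1"
    show "eventually (\<lambda>s. y > ereal (ratio \<alpha> s)) sequentially"
    proof (rule eventually_mono[OF ev])
      fix s assume "ereal (ratio \<alpha> s) \<le> 1"
      then show "y > ereal (ratio \<alpha> s)" using \<open>y > 1\<close> by (metis order.strict_trans1)
    qed
  qed
  moreover have "limsup (\<lambda>s. ereal (ratio \<alpha> s)) = \<infinity>"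
    using assms unfolding setS_def ratio_def by simp
  ultimately show False by simp
qed

lemma dist_cof: "dist (complex_of_real a) (complex_of_real b) = \<bar>a - b\<bar>"
  by (simp add: dist_norm norm_of_real flip: of_real_diff)

theorem part1:
  fixes h :: "real \<Rightarrow> real" and r0 :: real
  assumes r0: "r0 > 0"
    and mono: "mono_on {0..r0} h"
    and hnn: "\<And>x. x \<in> {0..r0} \<Longrightarrow> h x \<ge> 0"
    and h0: "h 0 = 0"
    and N: "N \<ge> 1" "1 / real N ^ (N\<^sup>2) \<le> r0"
    and summ: "summable (\<lambda>n. real (n + N) * h (1 / real (n + N) ^ ((n + N)\<^sup>2)))"
  shows "hausdorff_h h (complex_of_real ` setS) = 0"
proof -
  define F where "F q = real (q + 1) * h (rho q)" for q
  have rhoN: "q \<ge> N \<Longrightarrow> rho q \<in> {0..r0}" for q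
    using rho_mono[of N q] rho_pos[of q] N unfolding rho_def by auto
  have Fnn: "q \<ge> N \<Longrightarrow> F q \<ge> 0" for q unfolding F_def using hnn[OF rhoN] by simp
  have sumF: "summable (\<lambda>n. F (n + N))"
  proof (rule summable_comparison_test')
    show "summable (\<lambda>n. 2 * (real (n + N) * h (1 / real (n + N) ^ ((n + N)\<^sup>2))))"
      using summ by (rule summable_mult)
    fix n :: nat assume "n \<ge> 0"
    have hn: "h (rho (n + N)) \<ge> 0" using hnn[OF rhoN[of "n+N"]] by simp
    have "real (n + N + 1) \<le> 2 * real (n + N)" using N by simp
    then have "real (n + N + 1) * h (rho (n + N)) \<le> 2 * real (n + N) * h (rho (n + N))"
      using hn by (intro mult_right_mono) auto
    then show "norm (F (n + N)) \<le> 2 * (real (n + N) * h (1 / real (n + N) ^ ((n + N)\<^sup>2)))"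
      using hn unfolding F_def rho_def by (simp add: algebra_simps)
  qed
  have HD: "hausdorff_delta h \<delta> (complex_of_real ` setS) = 0" if \<delta>: "\<delta> > 0" for \<delta>
  proof -
    have "hausdorff_delta h \<delta> (complex_of_real ` setS) \<le> 0 + ennreal e" if e: "e > 0" for e
    proof -
      obtain M where M: "\<And>m. m \<ge> M \<Longrightarrow> norm (\<Sum>i. F (i + m + N)) < e"
        using suminf_exist_split[OF e sumF] by (auto simp: add.assoc)
      define m where "m = max M (nat \<lceil>2 / \<delta>\<rceil> + 2)"
      define Q where "Q = m + N"
      have QN: "Q \<ge> N" "Q \<ge> 1" "Q \<ge> 2" using N unfolding Q_def m_def by auto
      have Qd: "real Q > 2 / \<delta>" unfolding Q_def m_def by linarith
      have tail: "(\<Sum>i. F (i + Q)) < e" using M[of m] unfolding Q_def m_def by (simp add: add.assoc)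
      have rhoQ: "2 * rho Q < \<delta>"
      proof -
        have "2 * rho Q \<le> 2 / real Q" using rho_le[of Q] QN by simp
        also have "\<dots> < \<delta>" using Qd \<delta> QN by (simp add: field_simps)
        finally show ?thesis .
      qed
      define Ac :: "nat \<times> nat \<Rightarrow> complex set" where
        "Ac z = (if Q \<le> fst z \<and> snd z \<le> fst z
                 then cball (complex_of_real (real (snd z) / real (fst z))) (rho (fst z)) else {})" for z
      define A where "A n = Ac (prod_decode n)" for n
      have diamA: "diameter (Ac z) / 2 = (if Q \<le> fst z \<and> snd z \<le> fst z then rho (fst z) else 0)" for z
        unfolding Ac_def using rho_pos[of "fst z"] QN by auto
      have coverA: "complex_of_real ` setS \<subseteq> (\<Union>n. A n)"
      proof
        fix z assume "z \<in> complex_of_real ` setS"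
        then obtain \<alpha> where a: "\<alpha> \<in> setS" "z = complex_of_real \<alpha>" by auto
        then have a3: "0 < \<alpha>" "\<alpha> < 1" "\<alpha> \<notin> \<rat>" unfolding setS_def by auto
        interpret irr \<alpha> using a3 by unfold_locales
        obtain s where s: "s \<ge> Q" "ratio \<alpha> s > 1" using freq_ratio[OF a(1)] by blast
        have Qs1: "Qn s \<ge> 1" using q_ge1[of s] by simp
        have Qs2: "Qn s \<ge> 2"
        proof (rule ccontr)
          assume "\<not> Qn s \<ge> 2"
          then have "Qn s = 1" using q_ge1[of s] by simp
          then show False using s(2) by (simp add: ratio_def cf_q_def)
        qed
        have den: "(Qn s)^2 * ln (Qn s) > 0" using Qs2 by simp
        have "1 < ln (Qn (Suc s)) / ((Qn s)^2 * ln (Qn s))" using s(2) by (simp add: ratio_def cf_q_def)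
        then have lnc: "ln (Qn (Suc s)) > (Qn s)^2 * ln (Qn s)" using den by (simp add: less_divide_eq)
        note hc = H_core[OF Qs2 lnc]
        define qs where "qs = fst (cf_qpair \<alpha> s)"
        define ps where "ps = fst (cf_ppair \<alpha> s)"
        have qsQ: "qs \<ge> Q" using q_ge_n[of s] s(1) qs_def by simp
        have "z \<in> Ac (qs, ps)"
        proof -
          have "dist (complex_of_real (real ps / real qs)) z = \<bar>\<alpha> - real ps / real qs\<bar>"
            using a(2) dist_cof[of "real ps / real qs" \<alpha>] by (simp add: abs_minus_commute)
          then have "dist (complex_of_real (real ps / real qs)) z \<le> rho qs"
            using hc(1) unfolding rho_def qs_def ps_def by simp
          then show ?thesis unfolding Ac_def using qsQ hc(2) qs_def ps_def by simp
        qed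
        then show "z \<in> (\<Union>n. A n)" unfolding A_def
          by (intro UN_I[of "prod_encode (qs, ps)"]) (auto simp: prod_encode_inverse)
      qed
      have goodA: "\<forall>n. bounded (A n) \<and> diameter (A n) < \<delta>"
      proof
        fix n
        obtain z where z: "A n = Ac z" unfolding A_def by simp
        have "diameter (Ac z) < \<delta>"
        proof (cases "Q \<le> fst z \<and> snd z \<le> fst z")
          case True
          then have "rho (fst z) \<le> rho Q" using rho_mono[of Q "fst z"] QN by simp
          then show ?thesis using diamA[of z] True rhoQ by simp
        next
          case False
          then have "Ac z = {}" unfolding Ac_def by auto
          then have "diameter (Ac z) = 0" by simp
          then show ?thesis using \<delta> by simp
        qed
        moreover have "bounded (Ac z)" unfolding Ac_def by simp
        ultimately show "bounded (A n) \<and> diameter (A n) < \<delta>" using z by simp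
      qed
      have "hausdorff_delta h \<delta> (complex_of_real ` setS) \<le> (\<Sum>n. ennreal (h (diameter (A n) / 2)))"
        unfolding hausdorff_delta_def using coverA goodA by (intro INF_lower) auto
      also have "\<dots> = (\<Sum>q. ennreal (if Q \<le> q then F q else 0))"
        unfolding A_def
      proof (rule suminf_ennreal_2dimen)
        fix q
        have "(\<Sum>p. ennreal (h (diameter (Ac (q, p)) / 2))) = (\<Sum>p\<in>{..q}. ennreal (h (diameter (Ac (q, p)) / 2)))"
          by (rule suminf_finite) (auto simp: diamA h0)
        also have "\<dots> = (\<Sum>p\<in>{..q}. (if Q \<le> q then ennreal (h (rho q)) else 0))"
          by (intro sum.cong) (auto simp: diamA h0)
        also have "\<dots> = ennreal (if Q \<le> q then F q else 0)"
        proof (cases "Q \<le> q")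
          case True
          have "h (rho q) \<ge> 0" using hnn[OF rhoN[of q]] True QN by simp
          then show ?thesis using True unfolding F_def
            by (simp add: ennreal_mult ennreal_of_nat_eq_real_of_nat)
        qed simp
        finally show "ennreal (if Q \<le> q then F q else 0) = (\<Sum>p. ennreal (h (diameter (Ac (q, p)) / 2)))" by simp
      qed
      also have "\<dots> = ennreal (\<Sum>q. (if Q \<le> q then F q else 0))"
      proof (rule suminf_ennreal2)
        show "0 \<le> (if Q \<le> q then F q else 0)" for q using Fnn QN by auto
        have "summable (\<lambda>i. F (i + Q))"
          using sumF summable_iff_shift[of "\<lambda>n. F (n + N)" m] unfolding Q_def by (simp add: add.assoc add.commute)
        then have "summable (\<lambda>i. (if Q \<le> i + Q then F (i + Q) else 0))" by simp
        then show "summable (\<lambda>q. if Q \<le> q then F q else 0)"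
          using summable_iff_shift[of "\<lambda>q. if Q \<le> q then F q else 0" Q] by simp
      qed
      also have "(\<Sum>q. (if Q \<le> q then F q else 0)) = (\<Sum>i. F (i + Q))"
      proof -
        have "summable (\<lambda>i. F (i + Q))"
          using sumF summable_iff_shift[of "\<lambda>n. F (n + N)" m] unfolding Q_def by (simp add: add.assoc add.commute)
        then have "(\<lambda>i. F (i + Q)) sums (\<Sum>i. F (i + Q))" by (rule summable_sums)
        then have "(\<lambda>i. (if Q \<le> i + Q then F (i + Q) else 0)) sums (\<Sum>i. F (i + Q))" by simp
        then have "(\<lambda>q. if Q \<le> q then F q else 0) sums (\<Sum>i. F (i + Q))"
          by (subst (asm) sums_zero_iff_shift) auto
        then show ?thesis by (rule sums_unique[symmetric])
      qed
      also have "ennreal (\<Sum>i. F (i + Q)) \<le> ennreal e" using tail by (intro ennreal_leI) linarith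
      finally show ?thesis by simp
    qed
    note le0 = this
    have "hausdorff_delta h \<delta> (complex_of_real ` setS) \<le> 0"
    proof (rule ennreal_le_epsilon)
      fix e :: real assume "0 < e"
      then show "hausdorff_delta h \<delta> (complex_of_real ` setS) \<le> 0 + ennreal e" by (rule le0)
    qed
    then show ?thesis by simp
  qed
  have "(SUP \<delta>\<in>{0<..}. hausdorff_delta h \<delta> (complex_of_real ` setS)) = (SUP \<delta>\<in>{0::real<..}. (0::ennreal))"
    using HD by (intro SUP_cong) auto
  then show ?thesis unfolding hausdorff_h_def by simp
qed


theorem proposition1:
  fixes h :: "real \<Rightarrow> real" and r0 :: real
  assumes "r0 > 0"
    and "continuous_on {0..r0} h"
    and "mono_on {0..r0} h"
    and "\<And>x. x \<in> {0..r0} \<Longrightarrow> h x \<ge> 0"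
    and "h 0 = 0"
    and "\<exists>N::nat. N \<ge> 1 \<and> 1 / real N ^ (N\<^sup>2) \<le> r0 \<and>
           summable (\<lambda>n. real (n + N) * h (1 / real (n + N) ^ ((n + N)\<^sup>2)))"
  shows "hausdorff_h h (complex_of_real ` setS) = 0
     \<and> (\<exists>G. G \<subseteq> setS \<and> gdelta_in euclideanreal G \<and> {0<..<1} \<subseteq> closure G)
     \<and> uncountable setS"
proof -
  obtain N :: nat where N: "N \<ge> 1" "1 / real N ^ (N\<^sup>2) \<le> r0"
    "summable (\<lambda>n. real (n + N) * h (1 / real (n + N) ^ ((n + N)\<^sup>2)))"
    using assms(6) by blast
  have "hausdorff_h h (complex_of_real ` setS) = 0"
    using part1[OF assms(1) assms(3) assms(4) assms(5) N] .
  then show ?thesis using part2 by blast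
qed

end
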